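(* Let $A$ be a finite abelian group with $A\cong H\times C$, $H$ a finite abelian group and $C$ cyclic. Let $M$ be a finite $\mathbb{Z}_p[A]$-module on which $H$ acts trivially and with $M^C\cong\mathbb{F}_p$. Then $N_{\mathrm{typical}}(A,M)$ is contained in the image of the (injective) inflation map $H^2(H,M^C)\to H^2(A,M)$.
   Context: For a finite abelian group $D$, subgroup $I$ with $D/I$ cyclic and finite $D$-module $M$: $\widehat D:=\hat{\mathbb{Z}}\times_{D/I}D$ (fiber product of the quotient maps), $R(D,I,M):=\ker(H^2(D,M)\xrightarrow{\inf}H^2(\widehat D,M))$. $\mathcal{C}$ is the set of pairs $(D,I)$ with $D\le A$ generated by at most two elements, $I\le D$ cyclic with $D/I$ cyclic. $N_{\mathrm{typical}}(A,M):=\ker\bigl(H^2(A,M)\to\bigoplus_{(D,I)\in\mathcal{C}}H^2(D,M)/R(D,I,M)\bigr)$, the maps being restrictions. *)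

theory Defs
  imports "HOL-Algebra.Algebra"
begin

definition nsmul :: "nat \<Rightarrow> 'm::ab_group_add \<Rightarrow> 'm" where
  "nsmul n x = (\<Sum>i<n. x)"

definition is_module :: "('g,'b) monoid_scheme \<Rightarrow> 'm::ab_group_add set \<Rightarrow> ('g \<Rightarrow> 'm \<Rightarrow> 'm) \<Rightarrow> bool" where
  "is_module G M act \<longleftrightarrow> 0 \<in> M \<and> (\<forall>x\<in>M. \<forall>y\<in>M. x + y \<in> M) \<and> (\<forall>x\<in>M. - x \<in> M) \<and>
     (\<forall>g\<in>carrier G. \<forall>x\<in>M. act g x \<in> M) \<and>
     (\<forall>g\<in>carrier G. \<forall>x\<in>M. \<forall>y\<in>M. act g (x + y) = act g x + act g y) \<and>
     (\<forall>x\<in>M. act \<one>\<^bsub>G\<^esub> x = x) \<and>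
     (\<forall>g\<in>carrier G. \<forall>h\<in>carrier G. \<forall>x\<in>M. act (g \<otimes>\<^bsub>G\<^esub> h) x = act g (act h x))"

text \<open>Inhomogeneous 2-cocycles and 2-coboundaries; a class in H^2(G,M) is represented by a
  cocycle, and it is zero iff the cocycle is a coboundary.\<close>
definition cocycle2 :: "('g,'b) monoid_scheme \<Rightarrow> 'm::ab_group_add set \<Rightarrow> ('g \<Rightarrow> 'm \<Rightarrow> 'm) \<Rightarrow> ('g \<Rightarrow> 'g \<Rightarrow> 'm) \<Rightarrow> bool" where
  "cocycle2 G M act f \<longleftrightarrow>
     (\<forall>g\<in>carrier G. \<forall>h\<in>carrier G. f g h \<in> M) \<and>
     (\<forall>g\<in>carrier G. \<forall>h\<in>carrier G. \<forall>k\<in>carrier G.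
        act g (f h k) - f (g \<otimes>\<^bsub>G\<^esub> h) k + f g (h \<otimes>\<^bsub>G\<^esub> k) - f g h = 0)"

definition coboundary2 :: "('g,'b) monoid_scheme \<Rightarrow> 'm::ab_group_add set \<Rightarrow> ('g \<Rightarrow> 'm \<Rightarrow> 'm) \<Rightarrow> ('g \<Rightarrow> 'g \<Rightarrow> 'm) \<Rightarrow> bool" where
  "coboundary2 G M act f \<longleftrightarrow>
     (\<exists>c. (\<forall>g\<in>carrier G. c g \<in> M) \<and>
        (\<forall>g\<in>carrier G. \<forall>h\<in>carrier G. f g h = act g (c h) - c (g \<otimes>\<^bsub>G\<^esub> h) + c g))"

text \<open>The finite fibre product Z/n \<times>_{D/I} D, where Z/n \<rightarrow> D/I sends 1 to the coset of gam
  (requires gam^n \<in> I).  These groups are the finite quotients (cofinal system) of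
  \<open>\<hat>D = \<hat>Z \<times>_{D/I} D\<close> through which the projection to D factors.\<close>
definition fiber_grp :: "('g,'b) monoid_scheme \<Rightarrow> 'g set \<Rightarrow> 'g set \<Rightarrow> 'g \<Rightarrow> nat \<Rightarrow> (nat \<times> 'g) monoid" where
  "fiber_grp G D I gam n =
     \<lparr>partial_object.carrier = {(k, d). k < n \<and> d \<in> D \<and> d \<otimes>\<^bsub>G\<^esub> inv\<^bsub>G\<^esub> (gam [^]\<^bsub>G\<^esub> k) \<in> I},
      monoid.mult = (\<lambda>(k, d) (k', d'). ((k + k') mod n, d \<otimes>\<^bsub>G\<^esub> d')),
      monoid.one = (0, \<one>\<^bsub>G\<^esub>)\<rparr>"

text \<open>Membership of (the class of the restriction to D of) f in R(D,I,M): the inflation to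
  the profinite group \<hat>D vanishes iff it vanishes at some finite level Z/n \<times>_{D/I} D.\<close>
definition in_R :: "('g,'b) monoid_scheme \<Rightarrow> 'm::ab_group_add set \<Rightarrow> ('g \<Rightarrow> 'm \<Rightarrow> 'm) \<Rightarrow> 'g set \<Rightarrow> 'g set \<Rightarrow> ('g \<Rightarrow> 'g \<Rightarrow> 'm) \<Rightarrow> bool" where
  "in_R G M act D I f \<longleftrightarrow>
     (\<exists>gam\<in>D. (\<forall>d\<in>D. \<exists>k::nat. d \<otimes>\<^bsub>G\<^esub> inv\<^bsub>G\<^esub> (gam [^]\<^bsub>G\<^esub> k) \<in> I) \<and>
        (\<exists>n::nat. n > 0 \<and> gam [^]\<^bsub>G\<^esub> n \<in> I \<and>
           coboundary2 (fiber_grp G D I gam n) M (\<lambda>x. act (snd x)) (\<lambda>x y. f (snd x) (snd y))))"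

definition typical_pair :: "('g,'b) monoid_scheme \<Rightarrow> 'g set \<Rightarrow> 'g set \<Rightarrow> bool" where
  "typical_pair G D I \<longleftrightarrow>
     (\<exists>a\<in>carrier G. \<exists>b\<in>carrier G. D = generate G {a, b}) \<and>
     (\<exists>c\<in>D. I = generate G {c}) \<and>
     (\<exists>gam\<in>D. \<forall>d\<in>D. \<exists>k::nat. d \<otimes>\<^bsub>G\<^esub> inv\<^bsub>G\<^esub> (gam [^]\<^bsub>G\<^esub> k) \<in> I)"

definition in_N_typical :: "('g,'b) monoid_scheme \<Rightarrow> 'm::ab_group_add set \<Rightarrow> ('g \<Rightarrow> 'm \<Rightarrow> 'm) \<Rightarrow> ('g \<Rightarrow> 'g \<Rightarrow> 'm) \<Rightarrow> bool" where
  "in_N_typical G M act f \<longleftrightarrow> cocycle2 G M act f \<and>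
     (\<forall>D I. typical_pair G D I \<longrightarrow> in_R G M act D I f)"

definition fixed_pts :: "('g \<Rightarrow> 'm \<Rightarrow> 'm) \<Rightarrow> 'g set \<Rightarrow> 'm set \<Rightarrow> 'm set" where
  "fixed_pts act C M = {x \<in> M. \<forall>c\<in>C. act c x = x}"

definition proj :: "('g,'b) monoid_scheme \<Rightarrow> 'g set \<Rightarrow> 'g set \<Rightarrow> 'g \<Rightarrow> 'g" where
  "proj G H C a = (THE h. h \<in> H \<and> (\<exists>c\<in>C. a = h \<otimes>\<^bsub>G\<^esub> c))"

end

theory Submission
  imports Defs
begin

lemma mod_facts:
  assumes "is_module G M act"
  shows "0 \<in> M" "\<And>x y. x\<in>M \<Longrightarrow> y\<in>M \<Longrightarrow> x + y \<in> M" "\<And>x. x\<in>M \<Longrightarrow> - x \<in> M"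
    "\<And>x y. x\<in>M \<Longrightarrow> y\<in>M \<Longrightarrow> x - y \<in> M"
    "\<And>g x. g\<in>carrier G \<Longrightarrow> x\<in>M \<Longrightarrow> act g x \<in> M"
    "\<And>g x y. g\<in>carrier G \<Longrightarrow> x\<in>M \<Longrightarrow> y\<in>M \<Longrightarrow> act g (x + y) = act g x + act g y"
    "\<And>g. g\<in>carrier G \<Longrightarrow> act g 0 = 0"
    "\<And>g x. g\<in>carrier G \<Longrightarrow> x\<in>M \<Longrightarrow> act g (- x) = - act g x"
    "\<And>g x y. g\<in>carrier G \<Longrightarrow> x\<in>M \<Longrightarrow> y\<in>M \<Longrightarrow> act g (x - y) = act g x - act g y"
    "\<And>x. x\<in>M \<Longrightarrow> act \<one>\<^bsub>G\<^esub> x = x"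
    "\<And>g h x. g\<in>carrier G \<Longrightarrow> h\<in>carrier G \<Longrightarrow> x\<in>M \<Longrightarrow> act (g \<otimes>\<^bsub>G\<^esub> h) x = act g (act h x)"
proof -
  note d = assms[unfolded is_module_def]
  show 0: "0 \<in> M" using d by blast
  show a: "\<And>x y. x\<in>M \<Longrightarrow> y\<in>M \<Longrightarrow> x + y \<in> M" using d by blast
  show n: "\<And>x. x\<in>M \<Longrightarrow> - x \<in> M" using d by blast
  show "\<And>x y. x\<in>M \<Longrightarrow> y\<in>M \<Longrightarrow> x - y \<in> M" using a n by (metis diff_conv_add_uminus)
  show ac: "\<And>g x. g\<in>carrier G \<Longrightarrow> x\<in>M \<Longrightarrow> act g x \<in> M" using d by blast
  show ad: "\<And>g x y. g\<in>carrier G \<Longrightarrow> x\<in>M \<Longrightarrow> y\<in>M \<Longrightarrow> act g (x + y) = act g x + act g y" using d by blast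
  show z: "\<And>g. g\<in>carrier G \<Longrightarrow> act g 0 = 0"
  proof -
    fix g assume g: "g \<in> carrier G"
    have "act g (0 + 0) = act g 0 + act g 0" using ad[OF g 0 0] .
    then show "act g 0 = 0" by simp
  qed
  show ng: "\<And>g x. g\<in>carrier G \<Longrightarrow> x\<in>M \<Longrightarrow> act g (- x) = - act g x"
  proof -
    fix g x assume g: "g \<in> carrier G" and x: "x \<in> M"
    have "act g (x + - x) = act g x + act g (- x)" using ad[OF g x n[OF x]] .
    then show "act g (- x) = - act g x" using z[OF g] by (simp add: eq_neg_iff_add_eq_0 add.commute)
  qed
  show "\<And>g x y. g\<in>carrier G \<Longrightarrow> x\<in>M \<Longrightarrow> y\<in>M \<Longrightarrow> act g (x - y) = act g x - act g y"
    using ad ng n by (metis diff_conv_add_uminus)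
  show "\<And>x. x\<in>M \<Longrightarrow> act \<one>\<^bsub>G\<^esub> x = x" using d by blast
  show "\<And>g h x. g\<in>carrier G \<Longrightarrow> h\<in>carrier G \<Longrightarrow> x\<in>M \<Longrightarrow> act (g \<otimes>\<^bsub>G\<^esub> h) x = act g (act h x)" using d by blast
qed

lemma cocycle_add_cob:
  assumes mo: "monoid G" and md: "is_module G M act" and f: "cocycle2 G M act f"
    and c: "\<forall>a\<in>carrier G. c a \<in> M"
  shows "cocycle2 G M act (\<lambda>a b. f a b + (act a (c b) - c (a \<otimes>\<^bsub>G\<^esub> b) + c a))"
proof -
  note mf = mod_facts[OF md]
  have fM: "\<And>g h. g\<in>carrier G \<Longrightarrow> h\<in>carrier G \<Longrightarrow> f g h \<in> M" using f unfolding cocycle2_def by blast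
  have fid: "\<And>g h k. g\<in>carrier G \<Longrightarrow> h\<in>carrier G \<Longrightarrow> k\<in>carrier G \<Longrightarrow>
        act g (f h k) - f (g \<otimes>\<^bsub>G\<^esub> h) k + f g (h \<otimes>\<^bsub>G\<^esub> k) - f g h = 0"
    using f unfolding cocycle2_def by blast
  show ?thesis unfolding cocycle2_def
  proof (intro conjI ballI)
    fix g h assume g: "g\<in>carrier G" and h: "h\<in>carrier G"
    show "f g h + (act g (c h) - c (g \<otimes>\<^bsub>G\<^esub> h) + c g) \<in> M"
      using g h mf fM c monoid.m_closed[OF mo g h] by simp
  next
    fix g h k assume g: "g\<in>carrier G" and h: "h\<in>carrier G" and k: "k\<in>carrier G"
    have hk: "h \<otimes>\<^bsub>G\<^esub> k \<in> carrier G" "g \<otimes>\<^bsub>G\<^esub> h \<in> carrier G"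
      using monoid.m_closed[OF mo] g h k by auto
    have as: "g \<otimes>\<^bsub>G\<^esub> h \<otimes>\<^bsub>G\<^esub> k = g \<otimes>\<^bsub>G\<^esub> (h \<otimes>\<^bsub>G\<^esub> k)" using monoid.m_assoc[OF mo g h k] .
    have e1: "act g (f h k + (act h (c k) - c (h \<otimes>\<^bsub>G\<^esub> k) + c h))
       = act g (f h k) + act g (act h (c k)) - act g (c (h \<otimes>\<^bsub>G\<^esub> k)) + act g (c h)"
      using g h k hk mf fM c by simp
    have e2: "act (g \<otimes>\<^bsub>G\<^esub> h) (c k) = act g (act h (c k))" using mf g h k c by simp
    show "act g (f h k + (act h (c k) - c (h \<otimes>\<^bsub>G\<^esub> k) + c h)) -
         (f (g \<otimes>\<^bsub>G\<^esub> h) k + (act (g \<otimes>\<^bsub>G\<^esub> h) (c k) - c (g \<otimes>\<^bsub>G\<^esub> h \<otimes>\<^bsub>G\<^esub> k) + c (g \<otimes>\<^bsub>G\<^esub> h))) +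
         (f g (h \<otimes>\<^bsub>G\<^esub> k) + (act g (c (h \<otimes>\<^bsub>G\<^esub> k)) - c (g \<otimes>\<^bsub>G\<^esub> (h \<otimes>\<^bsub>G\<^esub> k)) + c g)) -
         (f g h + (act g (c h) - c (g \<otimes>\<^bsub>G\<^esub> h) + c g)) = 0"
      unfolding e1 e2 as using fid[OF g h k] by (simp add: algebra_simps)
  qed
qed

lemma cocyc_id:
  assumes "cocycle2 G M act g" "a\<in>carrier G" "b\<in>carrier G" "k\<in>carrier G"
  shows "act a (g b k) - g (a \<otimes>\<^bsub>G\<^esub> b) k + g a (b \<otimes>\<^bsub>G\<^esub> k) - g a b = 0"
  using assms unfolding cocycle2_def by blast

lemma collapse:
  assumes cg: "comm_group G" and md: "is_module G M act" and g: "cocycle2 G M act g"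
    and sH: "subgroup H G" and sC: "subgroup C G"
    and dec: "\<forall>a\<in>carrier G. \<exists>h\<in>H. \<exists>c\<in>C. a = h \<otimes>\<^bsub>G\<^esub> c"
    and gCC: "\<forall>t\<in>C. \<forall>t'\<in>C. g t t' = 0"
    and gHC: "\<forall>h\<in>H. \<forall>t\<in>C. g h t = 0"
    and gCH: "\<forall>t\<in>C. \<forall>h\<in>H. g t h = 0"
  shows "\<And>h h' t t'. h\<in>H \<Longrightarrow> h'\<in>H \<Longrightarrow> t\<in>C \<Longrightarrow> t'\<in>C \<Longrightarrow>
            g (h \<otimes>\<^bsub>G\<^esub> t) (h' \<otimes>\<^bsub>G\<^esub> t') = g h h'"
    and "\<And>h h' t. h\<in>H \<Longrightarrow> h'\<in>H \<Longrightarrow> t\<in>C \<Longrightarrow> act t (g h h') = g h h'"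
proof -
  interpret comm_group G by (rule cg)
  note mf = mod_facts[OF md]
  have Hc: "H \<subseteq> carrier G" using subgroup.subset[OF sH] .
  have Cc: "C \<subseteq> carrier G" using subgroup.subset[OF sC] .
  have i: "\<And>a t. a\<in>carrier G \<Longrightarrow> t\<in>C \<Longrightarrow> g a t = 0"
  proof -
    fix a t assume a: "a\<in>carrier G" and t: "t\<in>C"
    have ex: "\<exists>h\<in>H. \<exists>c\<in>C. a = h \<otimes>\<^bsub>G\<^esub> c" using dec a by simp
    then obtain h t0 where h: "h\<in>H" "t0\<in>C" "a = h \<otimes>\<^bsub>G\<^esub> t0" by (elim bexE)
    have tt: "t0 \<otimes>\<^bsub>G\<^esub> t \<in> C" using subgroup.m_closed[OF sC h(2) t] .
    have hc: "h \<in> carrier G" "t0 \<in> carrier G" "t \<in> carrier G" using h t Hc Cc by auto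
    have e: "act h (g t0 t) - g (h \<otimes>\<^bsub>G\<^esub> t0) t + g h (t0 \<otimes>\<^bsub>G\<^esub> t) - g h t0 = 0"
      by (rule cocyc_id[OF g hc])
    have z: "g t0 t = 0" "g h (t0 \<otimes>\<^bsub>G\<^esub> t) = 0" "g h t0 = 0" "act h 0 = 0"
      using gCC gHC h t tt mf(7) hc by auto
    show "g a t = 0" using e unfolding z h(3) by simp
  qed
  have ii: "\<And>b t. b\<in>carrier G \<Longrightarrow> t\<in>C \<Longrightarrow> g t b = 0"
  proof -
    fix b t assume b: "b\<in>carrier G" and t: "t\<in>C"
    have ex: "\<exists>h\<in>H. \<exists>c\<in>C. b = h \<otimes>\<^bsub>G\<^esub> c" using dec b by simp
    then obtain h t0 where h: "h\<in>H" "t0\<in>C" "b = h \<otimes>\<^bsub>G\<^esub> t0" by (elim bexE)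
    have hc: "t \<in> carrier G" "h \<in> carrier G" "t0 \<in> carrier G" using h t Hc Cc by auto
    have th: "t \<otimes>\<^bsub>G\<^esub> h \<in> carrier G" using hc by simp
    have e: "act t (g h t0) - g (t \<otimes>\<^bsub>G\<^esub> h) t0 + g t (h \<otimes>\<^bsub>G\<^esub> t0) - g t h = 0"
      by (rule cocyc_id[OF g hc])
    have z: "g h t0 = 0" "g (t \<otimes>\<^bsub>G\<^esub> h) t0 = 0" "g t h = 0" "act t 0 = 0"
      using gHC gCH i[OF th h(2)] h t mf(7) hc by auto
    show "g t b = 0" using e unfolding z h(3) by simp
  qed
  have iii: "\<And>a b t. a\<in>carrier G \<Longrightarrow> b\<in>carrier G \<Longrightarrow> t\<in>C \<Longrightarrow> g a (t \<otimes>\<^bsub>G\<^esub> b) = g (a \<otimes>\<^bsub>G\<^esub> t) b"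
  proof -
    fix a b t assume a: "a\<in>carrier G" and b: "b\<in>carrier G" and t: "t\<in>C"
    have tc: "t \<in> carrier G" using t Cc by auto
    have e: "act a (g t b) - g (a \<otimes>\<^bsub>G\<^esub> t) b + g a (t \<otimes>\<^bsub>G\<^esub> b) - g a t = 0"
      by (rule cocyc_id[OF g a tc b])
    have z: "g t b = 0" "g a t = 0" "act a 0 = 0" using ii[OF b t] i[OF a t] mf(7) a by auto
    show "g a (t \<otimes>\<^bsub>G\<^esub> b) = g (a \<otimes>\<^bsub>G\<^esub> t) b" using e unfolding z by (simp add: algebra_simps)
  qed
  have iv: "\<And>a b t. a\<in>carrier G \<Longrightarrow> b\<in>carrier G \<Longrightarrow> t\<in>C \<Longrightarrow> g a (b \<otimes>\<^bsub>G\<^esub> t) = g a b"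
  proof -
    fix a b t assume a: "a\<in>carrier G" and b: "b\<in>carrier G" and t: "t\<in>C"
    have tc: "t \<in> carrier G" using t Cc by auto
    have ab: "a \<otimes>\<^bsub>G\<^esub> b \<in> carrier G" using a b by simp
    have e: "act a (g b t) - g (a \<otimes>\<^bsub>G\<^esub> b) t + g a (b \<otimes>\<^bsub>G\<^esub> t) - g a b = 0"
      by (rule cocyc_id[OF g a b tc])
    have z: "g b t = 0" "g (a \<otimes>\<^bsub>G\<^esub> b) t = 0" "act a 0 = 0" using i[OF b t] i[OF ab t] mf(7) a by auto
    show "g a (b \<otimes>\<^bsub>G\<^esub> t) = g a b" using e unfolding z by (simp add: algebra_simps)
  qed
  have v: "\<And>h h' t. h\<in>H \<Longrightarrow> h'\<in>H \<Longrightarrow> t\<in>C \<Longrightarrow> g (h \<otimes>\<^bsub>G\<^esub> t) h' = g h h'"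
  proof -
    fix h h' t assume h: "h\<in>H" and h': "h'\<in>H" and t: "t\<in>C"
    have hc: "h \<in> carrier G" "h' \<in> carrier G" "t \<in> carrier G" using h h' t Hc Cc by auto
    have "g (h \<otimes>\<^bsub>G\<^esub> t) h' = g h (t \<otimes>\<^bsub>G\<^esub> h')" using iii[OF hc(1) hc(2) t] by simp
    also have "t \<otimes>\<^bsub>G\<^esub> h' = h' \<otimes>\<^bsub>G\<^esub> t" using hc by (simp add: m_comm)
    also have "g h (h' \<otimes>\<^bsub>G\<^esub> t) = g h h'" using iv[OF hc(1) hc(2) t] .
    finally show "g (h \<otimes>\<^bsub>G\<^esub> t) h' = g h h'" .
  qed
  show "\<And>h h' t t'. h\<in>H \<Longrightarrow> h'\<in>H \<Longrightarrow> t\<in>C \<Longrightarrow> t'\<in>C \<Longrightarrow>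
            g (h \<otimes>\<^bsub>G\<^esub> t) (h' \<otimes>\<^bsub>G\<^esub> t') = g h h'"
  proof -
    fix h h' t t' assume h: "h\<in>H" and h': "h'\<in>H" and t: "t\<in>C" and t': "t'\<in>C"
    have hc: "h \<otimes>\<^bsub>G\<^esub> t \<in> carrier G" "h' \<in> carrier G" using h t h' Hc Cc by auto
    have "g (h \<otimes>\<^bsub>G\<^esub> t) (h' \<otimes>\<^bsub>G\<^esub> t') = g (h \<otimes>\<^bsub>G\<^esub> t) h'" using iv[OF hc t'] .
    then show "g (h \<otimes>\<^bsub>G\<^esub> t) (h' \<otimes>\<^bsub>G\<^esub> t') = g h h'" using v[OF h h' t] by simp
  qed
  show "\<And>h h' t. h\<in>H \<Longrightarrow> h'\<in>H \<Longrightarrow> t\<in>C \<Longrightarrow> act t (g h h') = g h h'"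
  proof -
    fix h h' t assume h: "h\<in>H" and h': "h'\<in>H" and t: "t\<in>C"
    have hc: "t \<in> carrier G" "h \<in> carrier G" "h' \<in> carrier G" using h h' t Hc Cc by auto
    have th: "t \<otimes>\<^bsub>G\<^esub> h = h \<otimes>\<^bsub>G\<^esub> t" using hc by (simp add: m_comm)
    have hh: "h \<otimes>\<^bsub>G\<^esub> h' \<in> carrier G" using hc by simp
    have e: "act t (g h h') - g (t \<otimes>\<^bsub>G\<^esub> h) h' + g t (h \<otimes>\<^bsub>G\<^esub> h') - g t h = 0"
      by (rule cocyc_id[OF g hc])
    have z: "g t (h \<otimes>\<^bsub>G\<^esub> h') = 0" "g t h = 0" using ii[OF hh t] ii[OF hc(2) t] by auto
    have "act t (g h h') = g (t \<otimes>\<^bsub>G\<^esub> h) h'" using e unfolding z by (simp add: algebra_simps)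
    then show "act t (g h h') = g h h'" using th v[OF h h' t] by simp
  qed
qed

lemma gen2_quot:
  assumes cg: "comm_group G" and fin: "finite (carrier G)" and h: "h \<in> carrier G" and s: "s \<in> carrier G"
    and d: "d \<in> generate G {h, s}"
  shows "\<exists>k::nat. d \<otimes>\<^bsub>G\<^esub> inv\<^bsub>G\<^esub> (s [^]\<^bsub>G\<^esub> k) \<in> generate G {h}"
  using d
proof induction
  interpret comm_group G by (rule cg)
  case one
  show ?case by (rule exI[of _ "0::nat"]) (simp add: generate.one)
next
  interpret comm_group G by (rule cg)
  case (incl x)
  then have "x = h \<or> x = s" by simp
  then show ?case
  proof
    assume "x = h"
    then have e: "x \<otimes>\<^bsub>G\<^esub> inv\<^bsub>G\<^esub> (s [^]\<^bsub>G\<^esub> (0::nat)) = h" using h by simp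
    have "h \<in> generate G {h}" by (rule generate.incl) simp
    then show ?case unfolding e[symmetric] by (rule exI)
  next
    assume "x = s"
    then have e: "x \<otimes>\<^bsub>G\<^esub> inv\<^bsub>G\<^esub> (s [^]\<^bsub>G\<^esub> (1::nat)) = \<one>\<^bsub>G\<^esub>" using s by simp
    show ?case using generate.one[of G "{h}"] unfolding e[symmetric] by (rule exI)
  qed
next
  interpret comm_group G by (rule cg)
  case (inv x)
  then have "x = h \<or> x = s" by simp
  then show ?case
  proof
    assume "x = h"
    then have e: "inv\<^bsub>G\<^esub> x \<otimes>\<^bsub>G\<^esub> inv\<^bsub>G\<^esub> (s [^]\<^bsub>G\<^esub> (0::nat)) = inv\<^bsub>G\<^esub> h" using h by simp
    have "inv\<^bsub>G\<^esub> h \<in> generate G {h}" by (rule generate.inv) simp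
    then show ?case unfolding e[symmetric] by (rule exI)
  next
    assume xs: "x = s"
    have o: "order G > 0" unfolding order_def using fin s card_gt_0_iff[of "carrier G"] by (simp add: ex_in_conv[symmetric]) (rule exI)
    define k where "k = order G - 1"
    have "s [^]\<^bsub>G\<^esub> k \<otimes>\<^bsub>G\<^esub> s = s [^]\<^bsub>G\<^esub> (k + 1)"
      using nat_pow_mult[OF s, of k 1] s by simp
    also have "k + 1 = order G" using o k_def by simp
    also have "s [^]\<^bsub>G\<^esub> order G = \<one>\<^bsub>G\<^esub>" using pow_order_eq_1[OF s] .
    finally have e: "s [^]\<^bsub>G\<^esub> k \<otimes>\<^bsub>G\<^esub> s = \<one>\<^bsub>G\<^esub>" .
    have "inv\<^bsub>G\<^esub> x \<otimes>\<^bsub>G\<^esub> inv\<^bsub>G\<^esub> (s [^]\<^bsub>G\<^esub> k) = inv\<^bsub>G\<^esub> (s [^]\<^bsub>G\<^esub> k \<otimes>\<^bsub>G\<^esub> s)"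
      using xs s by (simp add: inv_mult_group)
    also have "\<dots> = \<one>\<^bsub>G\<^esub>" using e by simp
    finally have e2: "inv\<^bsub>G\<^esub> x \<otimes>\<^bsub>G\<^esub> inv\<^bsub>G\<^esub> (s [^]\<^bsub>G\<^esub> k) = \<one>\<^bsub>G\<^esub>" .
    show ?case using generate.one[of G "{h}"] unfolding e2[symmetric] by (rule exI)
  qed
next
  interpret comm_group G by (rule cg)
  case (eng x y)
  obtain k1 where k1: "x \<otimes>\<^bsub>G\<^esub> inv\<^bsub>G\<^esub> (s [^]\<^bsub>G\<^esub> (k1::nat)) \<in> generate G {h}"
    using eng.IH(1) by (rule exE)
  obtain k2 where k2: "y \<otimes>\<^bsub>G\<^esub> inv\<^bsub>G\<^esub> (s [^]\<^bsub>G\<^esub> (k2::nat)) \<in> generate G {h}"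
    using eng.IH(2) by (rule exE)
  have hs: "{h, s} \<subseteq> carrier G" using h s by simp
  have xc: "x \<in> carrier G" "y \<in> carrier G" using subsetD[OF generate_incl[OF hs] eng.hyps(1)] subsetD[OF generate_incl[OF hs] eng.hyps(2)] by auto
  have "(x \<otimes>\<^bsub>G\<^esub> inv\<^bsub>G\<^esub> (s [^]\<^bsub>G\<^esub> k1)) \<otimes>\<^bsub>G\<^esub> (y \<otimes>\<^bsub>G\<^esub> inv\<^bsub>G\<^esub> (s [^]\<^bsub>G\<^esub> k2))
      = (x \<otimes>\<^bsub>G\<^esub> y) \<otimes>\<^bsub>G\<^esub> inv\<^bsub>G\<^esub> (s [^]\<^bsub>G\<^esub> k1 \<otimes>\<^bsub>G\<^esub> s [^]\<^bsub>G\<^esub> k2)"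
    using xc s by (simp add: inv_mult m_ac)
  also have "s [^]\<^bsub>G\<^esub> k1 \<otimes>\<^bsub>G\<^esub> s [^]\<^bsub>G\<^esub> k2 = s [^]\<^bsub>G\<^esub> (k1 + k2)" using nat_pow_mult[OF s] .
  finally have e: "(x \<otimes>\<^bsub>G\<^esub> inv\<^bsub>G\<^esub> (s [^]\<^bsub>G\<^esub> k1)) \<otimes>\<^bsub>G\<^esub> (y \<otimes>\<^bsub>G\<^esub> inv\<^bsub>G\<^esub> (s [^]\<^bsub>G\<^esub> k2))
      = (x \<otimes>\<^bsub>G\<^esub> y) \<otimes>\<^bsub>G\<^esub> inv\<^bsub>G\<^esub> (s [^]\<^bsub>G\<^esub> (k1 + k2))" .
  show ?case using generate.eng[OF k1 k2] unfolding e by (rule exI)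
qed

lemma dec_unique:
  assumes cg: "comm_group G" and sH: "subgroup H G" and sC: "subgroup C G" and HC: "H \<inter> C = {\<one>\<^bsub>G\<^esub>}"
    and h: "h \<in> H" "h' \<in> H" and t: "t \<in> C" "t' \<in> C" and e: "h \<otimes>\<^bsub>G\<^esub> t = h' \<otimes>\<^bsub>G\<^esub> t'"
  shows "h = h'"
proof -
  interpret comm_group G by (rule cg)
  have c: "h \<in> carrier G" "h' \<in> carrier G" "t \<in> carrier G" "t' \<in> carrier G"
    using h t subgroup.subset[OF sH] subgroup.subset[OF sC] by auto
  have "inv\<^bsub>G\<^esub> h' \<otimes>\<^bsub>G\<^esub> h = t' \<otimes>\<^bsub>G\<^esub> inv\<^bsub>G\<^esub> t"
  proof -
    have 1: "t' = inv\<^bsub>G\<^esub> h' \<otimes>\<^bsub>G\<^esub> (h' \<otimes>\<^bsub>G\<^esub> t')"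
      using inv_solve_left[of t' h' "h' \<otimes>\<^bsub>G\<^esub> t'"] c by simp
    have "t' = (inv\<^bsub>G\<^esub> h' \<otimes>\<^bsub>G\<^esub> h) \<otimes>\<^bsub>G\<^esub> t"
      using 1 e c by (simp add: m_assoc)
    then show ?thesis using inv_solve_right[of "inv\<^bsub>G\<^esub> h' \<otimes>\<^bsub>G\<^esub> h" t' t] c by simp
  qed
  moreover have "inv\<^bsub>G\<^esub> h' \<otimes>\<^bsub>G\<^esub> h \<in> H" using h sH by (simp add: subgroup.m_closed subgroup.m_inv_closed)
  moreover have "t' \<otimes>\<^bsub>G\<^esub> inv\<^bsub>G\<^esub> t \<in> C" using t sC by (simp add: subgroup.m_closed subgroup.m_inv_closed)
  ultimately have "inv\<^bsub>G\<^esub> h' \<otimes>\<^bsub>G\<^esub> h \<in> H \<inter> C" by simp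
  then have "inv\<^bsub>G\<^esub> h' \<otimes>\<^bsub>G\<^esub> h = \<one>\<^bsub>G\<^esub>" using HC by simp
  then show "h = h'" using inv_solve_left'[of "\<one>\<^bsub>G\<^esub>" h' h] c by simp
qed

lemma sub_pow_closed:
  assumes "group G" "subgroup I G" "x \<in> I"
  shows "x [^]\<^bsub>G\<^esub> (m::nat) \<in> I"
proof (induction m)
  case 0
  then show ?case using assms subgroup.one_closed by simp
next
  case (Suc m)
  have xc: "x \<in> carrier G" using assms subgroup.subset by blast
  have "x [^]\<^bsub>G\<^esub> Suc m = x [^]\<^bsub>G\<^esub> m \<otimes>\<^bsub>G\<^esub> x"
    using monoid.nat_pow_Suc[OF group.is_monoid[OF assms(1)]] .
  then show ?case using subgroup.m_closed[OF assms(2) Suc.IH assms(3)] by simp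
qed

lemma fib_carrier:
  "carrier (fiber_grp G D I gam n) = {(k, d). k < n \<and> d \<in> D \<and> d \<otimes>\<^bsub>G\<^esub> inv\<^bsub>G\<^esub> (gam [^]\<^bsub>G\<^esub> k) \<in> I}"
  by (simp add: fiber_grp_def)

lemma fib_mult:
  "x \<otimes>\<^bsub>fiber_grp G D I gam n\<^esub> y = ((fst x + fst y) mod n, snd x \<otimes>\<^bsub>G\<^esub> snd y)"
  by (simp add: fiber_grp_def split: prod.split)

lemma inR_extract:
  assumes "in_R G M act D I f"
  obtains gam n c where "gam \<in> D" "\<forall>d\<in>D. \<exists>k::nat. d \<otimes>\<^bsub>G\<^esub> inv\<^bsub>G\<^esub> (gam [^]\<^bsub>G\<^esub> k) \<in> I"
    "n > 0" "gam [^]\<^bsub>G\<^esub> n \<in> I"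
    "\<forall>x\<in>carrier (fiber_grp G D I gam n). c x \<in> M"
    "\<forall>x\<in>carrier (fiber_grp G D I gam n). \<forall>y\<in>carrier (fiber_grp G D I gam n).
        f (snd x) (snd y) = act (snd x) (c y) - c (x \<otimes>\<^bsub>fiber_grp G D I gam n\<^esub> y) + c x"
  using assms unfolding in_R_def coboundary2_def by blast

lemma step1:
  assumes cg: "comm_group G" and sC: "subgroup C G" and R: "in_R G M act C C f"
  shows "\<exists>\<beta>. (\<forall>t\<in>C. \<beta> t \<in> M) \<and> (\<forall>t\<in>C. \<forall>t'\<in>C. f t t' = act t (\<beta> t') - \<beta> (t \<otimes>\<^bsub>G\<^esub> t') + \<beta> t)"
proof -
  obtain gam n c where n: "n > 0"
    and cM: "\<forall>x\<in>carrier (fiber_grp G C C gam n). c x \<in> M"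
    and ce: "\<forall>x\<in>carrier (fiber_grp G C C gam n). \<forall>y\<in>carrier (fiber_grp G C C gam n).
        f (snd x) (snd y) = act (snd x) (c y) - c (x \<otimes>\<^bsub>fiber_grp G C C gam n\<^esub> y) + c x"
    using inR_extract[OF R] by metis
  have Cc: "C \<subseteq> carrier G" using subgroup.subset[OF sC] .
  have inc: "\<And>t. t \<in> C \<Longrightarrow> (0, t) \<in> carrier (fiber_grp G C C gam n)"
  proof -
    fix t assume t: "t \<in> C"
    have "t \<otimes>\<^bsub>G\<^esub> inv\<^bsub>G\<^esub> (gam [^]\<^bsub>G\<^esub> (0::nat)) = t"
      using t Cc comm_group.axioms(2)[OF cg] by (simp add: group.is_monoid monoid.nat_pow_0 monoid.inv_one monoid.r_one subsetD)
    then show "(0, t) \<in> carrier (fiber_grp G C C gam n)" unfolding fib_carrier using n t by simp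
  qed
  show ?thesis
  proof (intro exI[of _ "\<lambda>t. c (0, t)"] conjI ballI)
    fix t assume "t \<in> C" then show "c (0, t) \<in> M" using cM inc by blast
  next
    fix t t' assume t: "t \<in> C" and t': "t' \<in> C"
    have "f t t' = act t (c (0, t')) - c ((0, t) \<otimes>\<^bsub>fiber_grp G C C gam n\<^esub> (0, t')) + c (0, t)"
      using ce inc[OF t] inc[OF t'] by fastforce
    then show "f t t' = act t (c (0, t')) - c (0, t \<otimes>\<^bsub>G\<^esub> t') + c (0, t)"
      unfolding fib_mult by simp
  qed
qed

lemma step2:
  assumes cg: "comm_group G" and fin: "finite (carrier G)" and h: "h \<in> carrier G" and s: "s \<in> carrier G"
    and md: "is_module G M act" and htriv: "\<forall>x\<in>M. act h x = x"
    and R: "in_R G M act (generate G {h, s}) (generate G {h}) f"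
  shows "\<exists>x\<in>M. f h s - f s h = x - act s x"
proof -
  define D where "D = generate G {h, s}"
  define I where "I = generate G {h}"
  obtain gam n c where gD: "gam \<in> D" and gg: "\<forall>d\<in>D. \<exists>k::nat. d \<otimes>\<^bsub>G\<^esub> inv\<^bsub>G\<^esub> (gam [^]\<^bsub>G\<^esub> k) \<in> I"
    and n: "n > 0" and gn: "gam [^]\<^bsub>G\<^esub> n \<in> I"
    and cM: "\<forall>x\<in>carrier (fiber_grp G D I gam n). c x \<in> M"
    and ce: "\<forall>x\<in>carrier (fiber_grp G D I gam n). \<forall>y\<in>carrier (fiber_grp G D I gam n).
        f (snd x) (snd y) = act (snd x) (c y) - c (x \<otimes>\<^bsub>fiber_grp G D I gam n\<^esub> y) + c x"
    using inR_extract[OF R[folded D_def I_def]] by metis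
  have gr: "group G" using comm_group.axioms(2)[OF cg] .
  have hs: "{h, s} \<subseteq> carrier G" "{h} \<subseteq> carrier G" using h s by auto
  have Dc: "D \<subseteq> carrier G" unfolding D_def using group.generate_incl[OF gr hs(1)] .
  have sI: "subgroup I G" unfolding I_def using group.generate_is_subgroup[OF gr hs(2)] .
  have hD: "h \<in> D" "s \<in> D" unfolding D_def by (auto intro: generate.incl)
  have hI: "h \<in> I" unfolding I_def by (auto intro: generate.incl)
  have gc: "gam \<in> carrier G" using gD Dc by blast
  obtain k where k: "s \<otimes>\<^bsub>G\<^esub> inv\<^bsub>G\<^esub> (gam [^]\<^bsub>G\<^esub> (k::nat)) \<in> I" using gg hD by blast
  define k0 where "k0 = k mod n"
  define P where "P = (gam [^]\<^bsub>G\<^esub> n) [^]\<^bsub>G\<^esub> (k div n)"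
  have PI: "P \<in> I" unfolding P_def using sub_pow_closed[OF gr sI gn] .
  have k0I: "s \<otimes>\<^bsub>G\<^esub> inv\<^bsub>G\<^esub> (gam [^]\<^bsub>G\<^esub> k0) \<in> I"
  proof -
    interpret comm_group G by (rule cg)
    have Pc: "P \<in> carrier G" unfolding P_def using gc by simp
    have "gam [^]\<^bsub>G\<^esub> k0 \<otimes>\<^bsub>G\<^esub> P = gam [^]\<^bsub>G\<^esub> (k0 + n * (k div n))"
      unfolding P_def using gc by (simp add: nat_pow_pow nat_pow_mult)
    also have "k0 + n * (k div n) = k" unfolding k0_def by (rule mod_mult_div_eq)
    finally have e: "gam [^]\<^bsub>G\<^esub> k = gam [^]\<^bsub>G\<^esub> k0 \<otimes>\<^bsub>G\<^esub> P" by simp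
    have "(s \<otimes>\<^bsub>G\<^esub> inv\<^bsub>G\<^esub> (gam [^]\<^bsub>G\<^esub> k)) \<otimes>\<^bsub>G\<^esub> P = s \<otimes>\<^bsub>G\<^esub> inv\<^bsub>G\<^esub> (gam [^]\<^bsub>G\<^esub> k0)"
      unfolding e using gc s Pc by (simp add: inv_mult m_assoc)
    then show ?thesis using subgroup.m_closed[OF sI k PI] by simp
  qed
  have k0n: "k0 < n" unfolding k0_def using n by simp
  define x where "x = ((0::nat), h)"
  define y where "y = (k0, s)"
  have xc: "x \<in> carrier (fiber_grp G D I gam n)"
    unfolding x_def fib_carrier using n hD hI h comm_group.axioms(2)[OF cg]
    by (simp add: group.is_monoid monoid.nat_pow_0 monoid.inv_one monoid.r_one)
  have yc: "y \<in> carrier (fiber_grp G D I gam n)"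
    unfolding y_def fib_carrier using k0n hD k0I by simp
  have hs_comm: "h \<otimes>\<^bsub>G\<^esub> s = s \<otimes>\<^bsub>G\<^esub> h" using comm_monoid.m_comm[OF comm_group.axioms(1)[OF cg] h s] .
  have xy: "x \<otimes>\<^bsub>fiber_grp G D I gam n\<^esub> y = (k0, h \<otimes>\<^bsub>G\<^esub> s)"
    unfolding fib_mult x_def y_def using k0n by simp
  have yx: "y \<otimes>\<^bsub>fiber_grp G D I gam n\<^esub> x = (k0, h \<otimes>\<^bsub>G\<^esub> s)"
    unfolding fib_mult x_def y_def using k0n hs_comm by simp
  have e1: "f h s = act h (c y) - c (k0, h \<otimes>\<^bsub>G\<^esub> s) + c x"
    using ce xc yc xy unfolding x_def y_def by fastforce
  have e2: "f s h = act s (c x) - c (k0, h \<otimes>\<^bsub>G\<^esub> s) + c y"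
    using ce xc yc yx unfolding x_def y_def by fastforce
  have "act h (c y) = c y" using htriv cM yc by blast
  then have "f h s - f s h = (c y - c (k0, h \<otimes>\<^bsub>G\<^esub> s) + c x) - (act s (c x) - c (k0, h \<otimes>\<^bsub>G\<^esub> s) + c y)"
    using e1 e2 by simp
  also have "\<dots> = c x - act s (c x)" by (simp add: algebra_simps)
  finally have "f h s - f s h = c x - act s (c x)" .
  moreover have "c x \<in> M" using cM xc by blast
  ultimately show ?thesis by blast
qed

lemma lin_c: fixes a b c d :: "'a::ab_group_add" shows "a - b + c - d = 0 \<Longrightarrow> c = d + b - a"
  by (simp add: algebra_simps)
lemma lin_b: fixes a b c d :: "'a::ab_group_add" shows "a - b + c - d = 0 \<Longrightarrow> b = a + c - d"
  by (simp add: algebra_simps)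

lemma F_a1:
  assumes mo: "monoid G" and md: "is_module G M act" and Fc: "cocycle2 G M act F"
    and F11: "F \<one>\<^bsub>G\<^esub> \<one>\<^bsub>G\<^esub> = 0" and a: "a \<in> carrier G"
  shows "F a \<one>\<^bsub>G\<^esub> = 0"
proof -
  have o: "\<one>\<^bsub>G\<^esub> \<in> carrier G" using monoid.one_closed[OF mo] .
  have e: "act a (F \<one>\<^bsub>G\<^esub> \<one>\<^bsub>G\<^esub>) - F (a \<otimes>\<^bsub>G\<^esub> \<one>\<^bsub>G\<^esub>) \<one>\<^bsub>G\<^esub> + F a (\<one>\<^bsub>G\<^esub> \<otimes>\<^bsub>G\<^esub> \<one>\<^bsub>G\<^esub>) - F a \<one>\<^bsub>G\<^esub> = 0"
    by (rule cocyc_id[OF Fc a o o])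
  have z: "act a 0 = 0" using mod_facts(7)[OF md a] .
  show ?thesis using e unfolding F11 z monoid.r_one[OF mo a] monoid.r_one[OF mo o] by simp
qed

lemma Kmult:
  assumes cg: "comm_group G" and md: "is_module G M act" and Fc: "cocycle2 G M act F"
    and t: "t \<in> carrier G" and t': "t' \<in> carrier G" and h: "h \<in> carrier G"
    and Ftt: "F t t' = 0" and htriv: "\<forall>x\<in>M. act h x = x"
  shows "F h (t \<otimes>\<^bsub>G\<^esub> t') - F (t \<otimes>\<^bsub>G\<^esub> t') h = (F h t - F t h) + act t (F h t' - F t' h)"
proof -
  interpret comm_group G by (rule cg)
  note mf = mod_facts[OF md]
  have FM: "\<And>a b. a\<in>carrier G \<Longrightarrow> b\<in>carrier G \<Longrightarrow> F a b \<in> M" using Fc unfolding cocycle2_def by simp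
  have e1: "act h (F t t') - F (h \<otimes>\<^bsub>G\<^esub> t) t' + F h (t \<otimes>\<^bsub>G\<^esub> t') - F h t = 0" by (rule cocyc_id[OF Fc h t t'])
  have e2: "act t (F t' h) - F (t \<otimes>\<^bsub>G\<^esub> t') h + F t (t' \<otimes>\<^bsub>G\<^esub> h) - F t t' = 0" by (rule cocyc_id[OF Fc t t' h])
  have e3: "act t (F h t') - F (t \<otimes>\<^bsub>G\<^esub> h) t' + F t (h \<otimes>\<^bsub>G\<^esub> t') - F t h = 0" by (rule cocyc_id[OF Fc t h t'])
  have c1: "t' \<otimes>\<^bsub>G\<^esub> h = h \<otimes>\<^bsub>G\<^esub> t'" "t \<otimes>\<^bsub>G\<^esub> h = h \<otimes>\<^bsub>G\<^esub> t" using t t' h m_comm by auto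
  have z: "act h 0 = 0" using mf(7)[OF h] .
  have s1: "F h (t \<otimes>\<^bsub>G\<^esub> t') = F h t + F (h \<otimes>\<^bsub>G\<^esub> t) t' - 0" using lin_c[OF e1] unfolding Ftt z .
  have s2: "F (t \<otimes>\<^bsub>G\<^esub> t') h = act t (F t' h) + F t (h \<otimes>\<^bsub>G\<^esub> t') - 0" using lin_b[OF e2] unfolding Ftt c1 .
  have s3: "F t (h \<otimes>\<^bsub>G\<^esub> t') = F t h + F (h \<otimes>\<^bsub>G\<^esub> t) t' - act t (F h t')" using lin_c[OF e3] unfolding c1 .
  have d: "act t (F h t' - F t' h) = act t (F h t') - act t (F t' h)" using mf(9)[OF t FM[OF h t'] FM[OF t' h]] .
  show ?thesis unfolding s1 s2 s3 d by (simp add: algebra_simps)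
qed

lemma comm_ext:
  assumes cg: "comm_group G" and md: "is_module G M act" and Fc: "cocycle2 G M act F"
    and s: "s \<in> carrier G" and Cd: "C = generate G {s}"
    and FCC: "\<forall>t\<in>C. \<forall>t'\<in>C. F t t' = 0"
    and h: "h \<in> carrier G" and htriv: "\<forall>x\<in>M. act h x = x" and Xh: "Xh \<in> M"
    and base: "F h s - F s h = act s Xh - Xh"
  shows "\<forall>t\<in>C. F h t - F t h = act t Xh - Xh"
proof -
  interpret comm_group G by (rule cg)
  note mf = mod_facts[OF md]
  have FM: "\<And>a b. a\<in>carrier G \<Longrightarrow> b\<in>carrier G \<Longrightarrow> F a b \<in> M" using Fc unfolding cocycle2_def by simp
  have Cc: "C \<subseteq> carrier G" unfolding Cd using generate_incl[of "{s}"] s by simp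
  define K where "K t = F h t - F t h - (act t Xh - Xh)" for t
  have KM: "\<And>t. t \<in> carrier G \<Longrightarrow> K t \<in> M" unfolding K_def using FM h mf Xh by simp
  have Kmul: "\<And>t t'. t\<in>C \<Longrightarrow> t'\<in>C \<Longrightarrow> K (t \<otimes>\<^bsub>G\<^esub> t') = K t + act t (K t')"
  proof -
    fix t t' assume tC: "t\<in>C" and t'C: "t'\<in>C"
    have t: "t \<in> carrier G" and t': "t' \<in> carrier G" using tC t'C Cc by auto
    have km: "F h (t \<otimes>\<^bsub>G\<^esub> t') - F (t \<otimes>\<^bsub>G\<^esub> t') h = (F h t - F t h) + act t (F h t' - F t' h)"
      using Kmult[OF cg md Fc t t' h _ htriv] FCC tC t'C by simp
    have a1: "act t (K t') = act t (F h t' - F t' h) - (act t (act t' Xh) - act t Xh)"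
    proof -
      have A: "F h t' - F t' h \<in> M" using mf FM t t' h by simp
      have B: "act t' Xh - Xh \<in> M" using mf t' Xh by simp
      have "act t (K t') = act t (F h t' - F t' h) - act t (act t' Xh - Xh)"
        unfolding K_def using mf(9)[OF t A B] .
      also have "act t (act t' Xh - Xh) = act t (act t' Xh) - act t Xh"
        using mf(9)[OF t mf(5)[OF t' Xh] Xh] .
      finally show ?thesis .
    qed
    have a2: "act (t \<otimes>\<^bsub>G\<^esub> t') Xh = act t (act t' Xh)" using mf(11)[OF t t' Xh] .
    show "K (t \<otimes>\<^bsub>G\<^esub> t') = K t + act t (K t')"
    proof -
      have L: "K (t \<otimes>\<^bsub>G\<^esub> t') = ((F h t - F t h) + act t (F h t' - F t' h)) - (act t (act t' Xh) - Xh)"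
        unfolding K_def km[symmetric] a2 by simp
      have R: "K t = F h t - F t h - (act t Xh - Xh)" unfolding K_def by simp
      show ?thesis unfolding L R a1 by (simp add: algebra_simps)
    qed
  qed
  have oC: "\<one>\<^bsub>G\<^esub> \<in> C" unfolding Cd by (rule generate.one)
  have K1: "K \<one>\<^bsub>G\<^esub> = 0"
  proof -
    have "K (\<one>\<^bsub>G\<^esub> \<otimes>\<^bsub>G\<^esub> \<one>\<^bsub>G\<^esub>) = K \<one>\<^bsub>G\<^esub> + act \<one>\<^bsub>G\<^esub> (K \<one>\<^bsub>G\<^esub>)" using Kmul[OF oC oC] .
    then have "K \<one>\<^bsub>G\<^esub> = K \<one>\<^bsub>G\<^esub> + K \<one>\<^bsub>G\<^esub>" using mf(10)[OF KM[OF one_closed]] by simp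
    then show ?thesis by simp
  qed
  have Ks: "K s = 0" unfolding K_def using base by simp
  have "\<And>t. t \<in> generate G {s} \<Longrightarrow> K t = 0"
  proof -
    fix t assume "t \<in> generate G {s}"
    then show "K t = 0"
    proof induction
      case one
      then show ?case using K1 .
    next
      case (incl x)
      then show ?case using Ks by simp
    next
      case (inv x)
      then have x: "x = s" by simp
      have isC: "inv\<^bsub>G\<^esub> s \<in> C" unfolding Cd by (rule generate.inv) simp
      have sC: "s \<in> C" unfolding Cd by (rule generate.incl) simp
      have isc: "inv\<^bsub>G\<^esub> s \<in> carrier G" using s by simp
      have "K (s \<otimes>\<^bsub>G\<^esub> inv\<^bsub>G\<^esub> s) = K s + act s (K (inv\<^bsub>G\<^esub> s))" using Kmul[OF sC isC] .
      then have a: "act s (K (inv\<^bsub>G\<^esub> s)) = 0" using K1 Ks s by simp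
      have "K (inv\<^bsub>G\<^esub> s) = act (inv\<^bsub>G\<^esub> s \<otimes>\<^bsub>G\<^esub> s) (K (inv\<^bsub>G\<^esub> s))"
        using s mf(10)[OF KM[OF isc]] by simp
      also have "\<dots> = act (inv\<^bsub>G\<^esub> s) (act s (K (inv\<^bsub>G\<^esub> s)))" using mf(11)[OF isc s KM[OF isc]] .
      also have "\<dots> = 0" unfolding a using mf(7)[OF isc] .
      finally show ?case unfolding x .
    next
      case (eng x y)
      have xC: "x \<in> C" "y \<in> C" using eng.hyps Cd by auto
      have "K (x \<otimes>\<^bsub>G\<^esub> y) = K x + act x (K y)" using Kmul[OF xC] .
      then show ?case using eng.IH mf(7) xC Cc by auto
    qed
  qed
  then show ?thesis unfolding K_def Cd by simp
qed

lemma proj_eq: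
  assumes cg: "comm_group G" and sH: "subgroup H G" and sC: "subgroup C G" and HC: "H \<inter> C = {\<one>\<^bsub>G\<^esub>}"
    and h: "h \<in> H" and t: "t \<in> C"
  shows "proj G H C (h \<otimes>\<^bsub>G\<^esub> t) = h"
  unfolding proj_def
proof (rule the_equality)
  show "h \<in> H \<and> (\<exists>c\<in>C. h \<otimes>\<^bsub>G\<^esub> t = h \<otimes>\<^bsub>G\<^esub> c)" using h t by auto
next
  fix h' assume "h' \<in> H \<and> (\<exists>c\<in>C. h \<otimes>\<^bsub>G\<^esub> t = h' \<otimes>\<^bsub>G\<^esub> c)"
  then obtain c where h': "h' \<in> H" "c \<in> C" "h \<otimes>\<^bsub>G\<^esub> t = h' \<otimes>\<^bsub>G\<^esub> c" by blast
  show "h' = h" using dec_unique[OF cg sH sC HC h h'(1) t h'(2) h'(3)] by simp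
qed

theorem mainTheorem12:
  fixes G :: "('g,'b) monoid_scheme" and H C :: "'g set" and p :: nat
    and M :: "'m::ab_group_add set" and act :: "'g \<Rightarrow> 'm \<Rightarrow> 'm" and f :: "'g \<Rightarrow> 'g \<Rightarrow> 'm"
  assumes "comm_group G" and "finite (carrier G)"
    and "subgroup H G" and "subgroup C G" and "H \<inter> C = {\<one>\<^bsub>G\<^esub>}"
    and "\<forall>a\<in>carrier G. \<exists>h\<in>H. \<exists>c\<in>C. a = h \<otimes>\<^bsub>G\<^esub> c"
    and "\<exists>c\<in>carrier G. C = generate G {c}"
    and "Factorial_Ring.prime p" and "finite M" and "is_module G M act"
    and "\<forall>x\<in>M. \<exists>k. nsmul (p ^ k) x = 0"
    and "\<forall>h\<in>H. \<forall>x\<in>M. act h x = x"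
    and "\<exists>\<phi>. bij_betw \<phi> (fixed_pts act C M) {0..<p} \<and>
           (\<forall>x\<in>fixed_pts act C M. \<forall>y\<in>fixed_pts act C M. \<phi> (x + y) = (\<phi> x + \<phi> y) mod p)"
    and "in_N_typical G M act f"
  shows "\<exists>\<phi>. cocycle2 (G\<lparr>carrier := H\<rparr>) (fixed_pts act C M) act \<phi> \<and>
           coboundary2 G M act (\<lambda>a b. f a b - \<phi> (proj G H C a) (proj G H C b))"
proof -
  note cg = assms(1) and fin = assms(2) and sH = assms(3) and sC = assms(4) and HC = assms(5)
    and dec = assms(6) and md = assms(10) and htriv = assms(12) and fN = assms(14)
  have gr: "group G" using comm_group.axioms(2)[OF cg] .
  have mo: "monoid G" using group.is_monoid[OF gr] .
  note mf = mod_facts[OF md]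
  obtain s where s: "s \<in> carrier G" and Cd: "C = generate G {s}" using assms(7) by blast
  have Hc: "H \<subseteq> carrier G" using subgroup.subset[OF sH] .
  have Cc: "C \<subseteq> carrier G" using subgroup.subset[OF sC] .
  have sinC: "s \<in> C" unfolding Cd by (rule generate.incl) simp
  have oC: "\<one>\<^bsub>G\<^esub> \<in> C" using subgroup.one_closed[OF sC] .
  have oH: "\<one>\<^bsub>G\<^esub> \<in> H" using subgroup.one_closed[OF sH] .
  have oc: "\<one>\<^bsub>G\<^esub> \<in> carrier G" using monoid.one_closed[OF mo] .
  have fcoc: "cocycle2 G M act f" using fN unfolding in_N_typical_def by simp
  have fR: "\<And>D I. typical_pair G D I \<Longrightarrow> in_R G M act D I f" using fN unfolding in_N_typical_def by simp
  have fM: "\<And>a b. a\<in>carrier G \<Longrightarrow> b\<in>carrier G \<Longrightarrow> f a b \<in> M" using fcoc unfolding cocycle2_def by simp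
  have Cmul: "\<And>t t'. t\<in>C \<Longrightarrow> t'\<in>C \<Longrightarrow> t \<otimes>\<^bsub>G\<^esub> t' \<in> C" using subgroup.m_closed[OF sC] .
  have comm: "\<And>x y. x\<in>carrier G \<Longrightarrow> y\<in>carrier G \<Longrightarrow> x \<otimes>\<^bsub>G\<^esub> y = y \<otimes>\<^bsub>G\<^esub> x"
    using comm_monoid.m_comm[OF comm_group.axioms(1)[OF cg]] .

  define pr where "pr a = proj G H C a" for a
  define rh where "rh a = inv\<^bsub>G\<^esub> (pr a) \<otimes>\<^bsub>G\<^esub> a" for a
  have prp: "\<And>h t. h\<in>H \<Longrightarrow> t\<in>C \<Longrightarrow> pr (h \<otimes>\<^bsub>G\<^esub> t) = h" unfolding pr_def using proj_eq[OF cg sH sC HC] by simp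
  have rhp: "\<And>h t. h\<in>H \<Longrightarrow> t\<in>C \<Longrightarrow> rh (h \<otimes>\<^bsub>G\<^esub> t) = t"
  proof -
    fix h t assume h: "h\<in>H" and t: "t\<in>C"
    have hc: "h \<in> carrier G" "t \<in> carrier G" using h t Hc Cc by auto
    have "t = inv\<^bsub>G\<^esub> h \<otimes>\<^bsub>G\<^esub> (h \<otimes>\<^bsub>G\<^esub> t)"
      using group.inv_solve_left[OF gr hc(2) hc(1) monoid.m_closed[OF mo hc]] by simp
    then show "rh (h \<otimes>\<^bsub>G\<^esub> t) = t" unfolding rh_def prp[OF h t] by simp
  qed
  have pr_dec: "\<And>a. a \<in> carrier G \<Longrightarrow> pr a \<in> H \<and> rh a \<in> C \<and> a = pr a \<otimes>\<^bsub>G\<^esub> rh a"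
  proof -
    fix a assume a: "a \<in> carrier G"
    then obtain h t where h: "h\<in>H" "t\<in>C" "a = h \<otimes>\<^bsub>G\<^esub> t" using dec by blast
    show "pr a \<in> H \<and> rh a \<in> C \<and> a = pr a \<otimes>\<^bsub>G\<^esub> rh a" using h prp rhp by simp
  qed
  have prC: "\<And>t. t\<in>C \<Longrightarrow> pr t = \<one>\<^bsub>G\<^esub> \<and> rh t = t"
  proof -
    fix t assume t: "t \<in> C"
    have "t = \<one>\<^bsub>G\<^esub> \<otimes>\<^bsub>G\<^esub> t" using monoid.l_one[OF mo] t Cc by auto
    then show "pr t = \<one>\<^bsub>G\<^esub> \<and> rh t = t" using prp[OF oH t] rhp[OF oH t] by metis
  qed
  have prH: "\<And>h. h\<in>H \<Longrightarrow> pr h = h \<and> rh h = \<one>\<^bsub>G\<^esub>"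
  proof -
    fix h assume h: "h \<in> H"
    have "h = h \<otimes>\<^bsub>G\<^esub> \<one>\<^bsub>G\<^esub>" using monoid.r_one[OF mo] h Hc by auto
    then show "pr h = h \<and> rh h = \<one>\<^bsub>G\<^esub>" using prp[OF h oC] rhp[OF h oC] by metis
  qed

  have tpC: "typical_pair G C C"
    unfolding typical_pair_def
  proof (intro conjI)
    show "\<exists>a\<in>carrier G. \<exists>b\<in>carrier G. C = generate G {a, b}" using s Cd by (intro bexI[of _ s]) simp_all
    show "\<exists>c\<in>C. C = generate G {c}" using sinC Cd by auto
    have "\<forall>d\<in>C. d \<otimes>\<^bsub>G\<^esub> inv\<^bsub>G\<^esub> (s [^]\<^bsub>G\<^esub> (0::nat)) \<in> C"
      using Cc monoid.r_one[OF mo] monoid.inv_one[OF mo] monoid.nat_pow_0[OF mo] by auto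
    then show "\<exists>gam\<in>C. \<forall>d\<in>C. \<exists>k::nat. d \<otimes>\<^bsub>G\<^esub> inv\<^bsub>G\<^esub> (gam [^]\<^bsub>G\<^esub> k) \<in> C" using sinC by blast
  qed
  obtain \<beta> where \<beta>M: "\<forall>t\<in>C. \<beta> t \<in> M"
    and \<beta>eq: "\<forall>t\<in>C. \<forall>t'\<in>C. f t t' = act t (\<beta> t') - \<beta> (t \<otimes>\<^bsub>G\<^esub> t') + \<beta> t"
    using step1[OF cg sC fR[OF tpC]] by blast
  define bb where "bb a = \<beta> (rh a)" for a
  have bbM: "\<And>a. a\<in>carrier G \<Longrightarrow> bb a \<in> M" unfolding bb_def using pr_dec \<beta>M by blast
  define F where "F a b = f a b + (act a (- bb b) - (- bb (a \<otimes>\<^bsub>G\<^esub> b)) + - bb a)" for a b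
  have Fc: "cocycle2 G M act F" unfolding F_def
    by (rule cocycle_add_cob[OF mo md fcoc]) (use bbM mf in simp)
  have Feq: "\<And>a b. a\<in>carrier G \<Longrightarrow> b\<in>carrier G \<Longrightarrow> F a b = f a b - (act a (bb b) - bb (a \<otimes>\<^bsub>G\<^esub> b) + bb a)"
    unfolding F_def using mf(8) bbM by (simp add: algebra_simps)
  have FM: "\<And>a b. a\<in>carrier G \<Longrightarrow> b\<in>carrier G \<Longrightarrow> F a b \<in> M" using Fc unfolding cocycle2_def by simp
  have FCC: "\<forall>t\<in>C. \<forall>t'\<in>C. F t t' = 0"
  proof (intro ballI)
    fix t t' assume t: "t\<in>C" and t': "t'\<in>C"
    have "bb t = \<beta> t" "bb t' = \<beta> t'" "bb (t \<otimes>\<^bsub>G\<^esub> t') = \<beta> (t \<otimes>\<^bsub>G\<^esub> t')"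
      unfolding bb_def using prC t t' Cmul by auto
    then show "F t t' = 0" using Feq[of t t'] \<beta>eq t t' Cc by auto
  qed
  have Fa1: "\<And>a. a\<in>carrier G \<Longrightarrow> F a \<one>\<^bsub>G\<^esub> = 0"
    using F_a1[OF mo md Fc] FCC oC by blast

  have base: "\<And>h. h \<in> H \<Longrightarrow> \<exists>x\<in>M. F h s - F s h = act s x - x"
  proof -
    fix h assume hH: "h \<in> H"
    have h: "h \<in> carrier G" using hH Hc by auto
    have tp: "typical_pair G (generate G {h, s}) (generate G {h})"
      unfolding typical_pair_def
    proof (intro conjI)
      show "\<exists>a\<in>carrier G. \<exists>b\<in>carrier G. generate G {h, s} = generate G {a, b}" using h s by auto
      have "h \<in> generate G {h, s}" by (rule generate.incl) simp
      then show "\<exists>c\<in>generate G {h, s}. generate G {h} = generate G {c}" by auto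
      have "s \<in> generate G {h, s}" by (rule generate.incl) simp
      then show "\<exists>gam\<in>generate G {h, s}. \<forall>d\<in>generate G {h, s}. \<exists>k::nat. d \<otimes>\<^bsub>G\<^esub> inv\<^bsub>G\<^esub> (gam [^]\<^bsub>G\<^esub> k) \<in> generate G {h}"
        using gen2_quot[OF cg fin h s] by blast
    qed
    obtain x where x: "x \<in> M" and fx: "f h s - f s h = x - act s x"
      using step2[OF cg fin h s md _ fR[OF tp]] htriv hH by blast
    have hs: "s \<otimes>\<^bsub>G\<^esub> h = h \<otimes>\<^bsub>G\<^esub> s" using comm[OF s h] .
    have ahb: "act h (bb s) = bb s" using htriv hH bbM s by blast
    have "F h s - F s h = (f h s - f s h) - (act h (bb s) - bb (h \<otimes>\<^bsub>G\<^esub> s) + bb h) + (act s (bb h) - bb (s \<otimes>\<^bsub>G\<^esub> h) + bb s)"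
      unfolding Feq[OF h s] Feq[OF s h] by (simp add: algebra_simps)
    also have "\<dots> = act s (bb h) - act s x - (bb h - x)" unfolding fx ahb hs by (simp add: algebra_simps)
    also have "\<dots> = act s (bb h - x) - (bb h - x)" using mf(9)[OF s bbM[OF h] x] by simp
    finally have "F h s - F s h = act s (bb h - x) - (bb h - x)" .
    moreover have "bb h - x \<in> M" using mf bbM[OF h] x by simp
    ultimately show "\<exists>x\<in>M. F h s - F s h = act s x - x" by blast
  qed
  define Xf where "Xf h = (SOME x. x \<in> M \<and> F h s - F s h = act s x - x)" for h
  define Xg where "Xg h = (if h = \<one>\<^bsub>G\<^esub> then 0 else Xf h)" for h
  have XgP: "\<And>h. h\<in>H \<Longrightarrow> Xg h \<in> M \<and> F h s - F s h = act s (Xg h) - Xg h"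
  proof -
    fix h assume hH: "h \<in> H"
    show "Xg h \<in> M \<and> F h s - F s h = act s (Xg h) - Xg h"
    proof (cases "h = \<one>\<^bsub>G\<^esub>")
      case True
      then show ?thesis unfolding Xg_def using FCC oC sinC mf(1) mf(7)[OF s] by simp
    next
      case False
      have "Xf h \<in> M \<and> F h s - F s h = act s (Xf h) - Xf h"
        unfolding Xf_def using someI_ex[OF base[OF hH, unfolded Bex_def]] .
      then show ?thesis unfolding Xg_def using False by simp
    qed
  qed
  have Xg1: "Xg \<one>\<^bsub>G\<^esub> = 0" unfolding Xg_def by simp
  have commF: "\<And>h t. h\<in>H \<Longrightarrow> t\<in>C \<Longrightarrow> F h t - F t h = act t (Xg h) - Xg h"
  proof -
    fix h t assume hH: "h \<in> H" and t: "t \<in> C"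
    have h: "h \<in> carrier G" using hH Hc by auto
    show "F h t - F t h = act t (Xg h) - Xg h"
      using comm_ext[OF cg md Fc s Cd FCC h _ _ ] htriv hH XgP[OF hH] t by blast
  qed
  define w where "w a = Xg (pr a) + F (pr a) (rh a)" for a
  have wM: "\<And>a. a\<in>carrier G \<Longrightarrow> w a \<in> M"
  proof -
    fix a assume a: "a \<in> carrier G"
    have "pr a \<in> carrier G" "rh a \<in> carrier G" using pr_dec[OF a] Hc Cc by auto
    then show "w a \<in> M" unfolding w_def using mf(2) XgP pr_dec[OF a] FM by simp
  qed
  define g where "g a b = F a b + (act a (w b) - w (a \<otimes>\<^bsub>G\<^esub> b) + w a)" for a b
  have gc: "cocycle2 G M act g" unfolding g_def
    by (rule cocycle_add_cob[OF mo md Fc]) (use wM in simp)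
  have wC: "\<And>t. t\<in>C \<Longrightarrow> w t = 0" unfolding w_def using prC Xg1 FCC oC by simp
  have wH: "\<And>h. h\<in>H \<Longrightarrow> w h = Xg h" unfolding w_def using prH Fa1 Hc by auto
  have wHC: "\<And>h t. h\<in>H \<Longrightarrow> t\<in>C \<Longrightarrow> w (h \<otimes>\<^bsub>G\<^esub> t) = Xg h + F h t" unfolding w_def using prp rhp by simp
  have gCC: "\<forall>t\<in>C. \<forall>t'\<in>C. g t t' = 0"
    unfolding g_def using wC FCC Cmul mf(7) Cc by auto
  have gHC: "\<forall>h\<in>H. \<forall>t\<in>C. g h t = 0"
  proof (intro ballI)
    fix h t assume h: "h\<in>H" and t: "t\<in>C"
    have "act h 0 = 0" using mf(7) h Hc by auto
    then show "g h t = 0" unfolding g_def using wC[OF t] wH[OF h] wHC[OF h t] by simp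
  qed
  have gCH: "\<forall>t\<in>C. \<forall>h\<in>H. g t h = 0"
  proof (intro ballI)
    fix t h assume t: "t\<in>C" and h: "h\<in>H"
    have "t \<otimes>\<^bsub>G\<^esub> h = h \<otimes>\<^bsub>G\<^esub> t" using comm t h Hc Cc by auto
    then have "g t h = F t h + (act t (Xg h) - (Xg h + F h t))" unfolding g_def using wC[OF t] wH[OF h] wHC[OF h t] by simp
    also have "\<dots> = (act t (Xg h) - Xg h) - (F h t - F t h)" by (simp add: algebra_simps)
    also have "\<dots> = 0" using commF[OF h t] by simp
    finally show "g t h = 0" .
  qed
  note col = collapse[OF cg md gc sH sC dec gCC gHC gCH]
  have gM: "\<And>a b. a\<in>carrier G \<Longrightarrow> b\<in>carrier G \<Longrightarrow> g a b \<in> M" using gc unfolding cocycle2_def by simp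
  show ?thesis
  proof (intro exI[of _ g] conjI)
    show "cocycle2 (G\<lparr>carrier := H\<rparr>) (fixed_pts act C M) act g"
      unfolding cocycle2_def fixed_pts_def
    proof (intro conjI ballI)
      fix h h' assume h: "h \<in> carrier (G\<lparr>carrier := H\<rparr>)" and h': "h' \<in> carrier (G\<lparr>carrier := H\<rparr>)"
      have hh: "h \<in> H" "h' \<in> H" using h h' by auto
      have "g h h' \<in> M" using gM hh Hc by auto
      moreover have "\<forall>c\<in>C. act c (g h h') = g h h'" using col(2) hh by blast
      ultimately show "g h h' \<in> {x \<in> M. \<forall>c\<in>C. act c x = x}" by simp
    next
      fix h h' k assume h: "h \<in> carrier (G\<lparr>carrier := H\<rparr>)" and h': "h' \<in> carrier (G\<lparr>carrier := H\<rparr>)"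
        and k: "k \<in> carrier (G\<lparr>carrier := H\<rparr>)"
      have hh: "h \<in> carrier G" "h' \<in> carrier G" "k \<in> carrier G" using h h' k Hc by auto
      show "act h (g h' k) - g (h \<otimes>\<^bsub>G\<lparr>carrier := H\<rparr>\<^esub> h') k + g h (h' \<otimes>\<^bsub>G\<lparr>carrier := H\<rparr>\<^esub> k) - g h h' = 0"
        using cocyc_id[OF gc hh] by simp
    qed
  next
    show "coboundary2 G M act (\<lambda>a b. f a b - g (proj G H C a) (proj G H C b))"
      unfolding coboundary2_def
    proof (intro exI[of _ "\<lambda>a. bb a - w a"] conjI ballI)
      fix a assume a: "a \<in> carrier G"
      show "bb a - w a \<in> M" using mf(4) bbM[OF a] wM[OF a] .
    next
      fix a b assume a: "a \<in> carrier G" and b: "b \<in> carrier G"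
      have ab: "a \<otimes>\<^bsub>G\<^esub> b \<in> carrier G" using monoid.m_closed[OF mo a b] .
      have da: "pr a \<in> H" "rh a \<in> C" "a = pr a \<otimes>\<^bsub>G\<^esub> rh a" using pr_dec[OF a] by auto
      have db: "pr b \<in> H" "rh b \<in> C" "b = pr b \<otimes>\<^bsub>G\<^esub> rh b" using pr_dec[OF b] by auto
      have "g (pr a \<otimes>\<^bsub>G\<^esub> rh a) (pr b \<otimes>\<^bsub>G\<^esub> rh b) = g (pr a) (pr b)"
        by (rule col(1)) (use da db in auto)
      then have "g (pr a) (pr b) = g a b" unfolding da(3)[symmetric] db(3)[symmetric] by simp
      then have e: "g (proj G H C a) (proj G H C b) = g a b" unfolding pr_def .
      have d: "act a (bb b - w b) = act a (bb b) - act a (w b)" using mf(9)[OF a bbM[OF b] wM[OF b]] .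
      show "f a b - g (proj G H C a) (proj G H C b) =
            act a (bb b - w b) - (bb (a \<otimes>\<^bsub>G\<^esub> b) - w (a \<otimes>\<^bsub>G\<^esub> b)) + (bb a - w a)"
        unfolding e unfolding d g_def Feq[OF a b] by (simp add: algebra_simps)
    qed
  qed
qed

end
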